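(* Let $2\le k<n$ be integers, let $\mathcal D\subset\{0,1,\dots,n-1\}$ be an arithmetic progression with $k$ elements, and let $\alpha=\frac{\log k}{\log n}$. Let $p\ge2$ be an even integer. Then there are constants $c_p>0$ and $C_p\ge1$ depending only on $p$ such that for every $i\ge1$, $$\mathrm{Dec}_p(C_i)\ge c_p\left(\frac{k^{\frac12-\frac1p}}{C_p\,n^{2/p}}\right)^{i}=c_p\left(\frac{k^{\frac12-\frac1p-\frac{2}{p\alpha}}}{C_p}\right)^{i}.$$
   Context: For $i\ge1$, $C_i=\{\sum_{j=1}^i a_jn^{-j}: a_j\in\mathcal D\}$ and $\mathcal I_i$ is the collection of the $k^i$ intervals $[c,c+n^{-i}]$, $c\in C_i$. For $I\in\mathcal I_i$ let $\theta_I=\{(x,x^2+t): x\in I,\ |t|\le n^{-2i}\}$. $\mathrm{Dec}_p(C_i)$ is the smallest constant such that $$\Big\|\sum_{I\in\mathcal I_i}F_{\theta_I}\Big\|_{L^p(\mathbb R^2)}\le \mathrm{Dec}_p(C_i)\Big(\sum_{I\in\mathcal I_i}\|F_{\theta_I}\|_{L^p(\mathbb R^2)}^2\Big)^{1/2}$$ for all functions $F_{\theta_I}:\mathbb R^2\to\mathbb C$ with $\operatorname{supp}\widehat{F_{\theta_I}}\subset\theta_I$. *)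

theory Defs
  imports "HOL-Analysis.Analysis"
begin

definition fourier2 :: "(real \<times> real \<Rightarrow> complex) \<Rightarrow> real \<times> real \<Rightarrow> complex" where
  "fourier2 F \<xi> = (\<integral>x. F x * cis (- 2 * pi * (x \<bullet> \<xi>)) \<partial>lborel)"

definition fourier_support :: "(real \<times> real \<Rightarrow> complex) \<Rightarrow> (real \<times> real) set" where
  "fourier_support F = closure {\<xi>. fourier2 F \<xi> \<noteq> 0}"

definition Lp_norm2 :: "real \<Rightarrow> (real \<times> real \<Rightarrow> complex) \<Rightarrow> real" where
  "Lp_norm2 p F = (\<integral>x. norm (F x) powr p \<partial>lborel) powr (1 / p)"

text \<open>Admissible test functions: integrable (so the Fourier transform is the
  usual integral) and p-th power integrable.\<close>
definition admissible :: "real \<Rightarrow> (real \<times> real \<Rightarrow> complex) \<Rightarrow> bool" where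
  "admissible p F \<longleftrightarrow> integrable lborel F \<and> integrable lborel (\<lambda>x. norm (F x) powr p)"

definition arith_prog_digits :: "nat \<Rightarrow> nat \<Rightarrow> nat set \<Rightarrow> bool" where
  "arith_prog_digits n k D \<longleftrightarrow> D \<subseteq> {0..<n} \<and> card D = k \<and>
     (\<exists>a d. D = {a + d * j | j. j < k})"

definition Cset :: "nat \<Rightarrow> nat set \<Rightarrow> nat \<Rightarrow> real set" where
  "Cset n D i = {(\<Sum>j\<in>{1..i}. real (a j) / real n ^ j) | a. \<forall>j\<in>{1..i}. a j \<in> D}"

definition theta :: "nat \<Rightarrow> nat \<Rightarrow> real \<Rightarrow> (real \<times> real) set" where
  "theta n i c = {(x, x\<^sup>2 + t) | x t. c \<le> x \<and> x \<le> c + 1 / real n ^ i \<and> \<bar>t\<bar> \<le> 1 / real n ^ (2 * i)}"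

text \<open>Decoupling constant: the smallest constant (infimum, in the extended reals;
  +infinity if no finite constant works).\<close>
definition Dec :: "real \<Rightarrow> nat \<Rightarrow> nat set \<Rightarrow> nat \<Rightarrow> ereal" where
  "Dec p n D i = Inf {ereal K | K. \<forall>F :: real \<Rightarrow> real \<times> real \<Rightarrow> complex.
      (\<forall>c\<in>Cset n D i. admissible p (F c) \<and> fourier_support (F c) \<subseteq> theta n i c) \<longrightarrow>
      Lp_norm2 p (\<lambda>x. \<Sum>c\<in>Cset n D i. F c x)
        \<le> K * sqrt (\<Sum>c\<in>Cset n D i. (Lp_norm2 p (F c))\<^sup>2)}"

end

theory Submission
  imports Defs "HOL-Probability.Sinc_Integral"
begin

lemma integrable_prod_mult:
  fixes f g :: "real \<Rightarrow> 'a::{real_normed_field, second_countable_topology, banach}"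
  assumes f: "integrable lborel f" and g: "integrable lborel g"
  shows "integrable (lborel::(real\<times>real) measure) (\<lambda>x. f (fst x) * g (snd x))"
proof -
  have [measurable]: "f \<in> borel_measurable lborel" "g \<in> borel_measurable lborel" using f g by auto
  have "integrable (lborel \<Otimes>\<^sub>M lborel) (\<lambda>x. f (fst x) * g (snd x))"
  proof (rule lborel_pair.Fubini_integrable)
    show "(\<lambda>x. f (fst x) * g (snd x)) \<in> borel_measurable (lborel \<Otimes>\<^sub>M lborel)" by measurable
    have "(\<lambda>x. \<integral>y. norm (f (fst (x, y)) * g (snd (x, y))) \<partial>lborel) = (\<lambda>x. norm (f x) * (\<integral>y. norm (g y) \<partial>lborel))"
      by (simp add: norm_mult)
    then show "integrable lborel (\<lambda>x. \<integral>y. norm (f (fst (x, y)) * g (snd (x, y))) \<partial>lborel)"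
      using f by (simp add: integrable_mult_left integrable_norm)
    show "AE x in lborel. integrable lborel (\<lambda>y. f (fst (x, y)) * g (snd (x, y)))"
      using g by (simp add: integrable_mult_right)
  qed
  then show ?thesis by (simp add: lborel_prod)
qed

lemma integral_prod_mult:
  fixes f g :: "real \<Rightarrow> 'a::{real_normed_field, second_countable_topology, banach}"
  assumes f: "integrable lborel f" and g: "integrable lborel g"
  shows "(\<integral>x. f (fst x) * g (snd x) \<partial>(lborel::(real\<times>real) measure)) = (\<integral>x. f x \<partial>lborel) * (\<integral>x. g x \<partial>lborel)"
proof -
  have i: "integrable (lborel \<Otimes>\<^sub>M lborel) (\<lambda>x. f (fst x) * g (snd x))"
    using integrable_prod_mult[OF f g] by (simp add: lborel_prod)
  have "(\<integral>x. f (fst x) * g (snd x) \<partial>(lborel::(real\<times>real) measure)) = (\<integral>x. f (fst x) * g (snd x) \<partial>(lborel \<Otimes>\<^sub>M lborel))"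
    by (simp add: lborel_prod)
  also have "\<dots> = (\<integral>x. (\<integral>y. f (fst (x,y)) * g (snd (x,y)) \<partial>lborel) \<partial>lborel)"
    using lborel_pair.integral_fst'[OF i] by simp
  also have "\<dots> = (\<integral>x. f x \<partial>lborel) * (\<integral>x. g x \<partial>lborel)"
    by simp
  finally show ?thesis .
qed

definition hh :: "real \<Rightarrow> real" where "hh t = (1 - cos t) / t\<^sup>2"

lemma one_minus_cos_le: "1 - cos (t::real) \<le> t\<^sup>2 / 2"
proof -
  have "1 - cos t = 2 * (sin (t/2))\<^sup>2"
    using cos_double_sin[of "t/2"] by simp
  also have "(sin (t/2))\<^sup>2 \<le> (t/2)\<^sup>2"
    using abs_sin_x_le_abs_x[of "t/2"] by (metis abs_ge_zero power2_abs power_mono)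
  finally show ?thesis by (simp add: power_divide)
qed

lemma hh_nonneg: "0 \<le> hh t"
  unfolding hh_def by (simp add: divide_nonneg_nonneg)

lemma hh_le: "hh t \<le> 4 * inverse (1 + t\<^sup>2)"
proof (cases "t = 0")
  case True then show ?thesis by (simp add: hh_def)
next
  case False
  have t2: "t\<^sup>2 > 0" using False by simp
  have a: "1 - cos t \<le> t\<^sup>2 / 2" by (rule one_minus_cos_le)
  have b: "1 - cos t \<le> 2" using cos_ge_minus_one[of t] by linarith 
  have "(1 - cos t) * (1 + t\<^sup>2) \<le> 4 * t\<^sup>2"
  proof (cases "t\<^sup>2 \<le> 1")
    case True
    have "(1 - cos t) * (1 + t\<^sup>2) \<le> (t\<^sup>2/2) * 2"
      using a True by (intro mult_mono) auto
    then show ?thesis using t2 by simp (smt (verit) t2)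
  next
    case False
    have "(1 - cos t) * (1 + t\<^sup>2) \<le> 2 * (1 + t\<^sup>2)"
      using b by (intro mult_right_mono) auto
    then show ?thesis using False by simp
  qed
  then have "1 - cos t \<le> 4 * t\<^sup>2 / (1 + t\<^sup>2)"
    by (simp add: le_divide_eq add_pos_nonneg)
  then have "(1 - cos t) / t\<^sup>2 \<le> 4 * t\<^sup>2 / (1 + t\<^sup>2) / t\<^sup>2"
    using t2 by (intro divide_right_mono) auto
  also have "\<dots> = 4 * inverse (1 + t\<^sup>2)" using t2 by (simp add: divide_simps add_pos_nonneg)
  finally show ?thesis unfolding hh_def .
qed

lemma integrable_hh: "integrable lborel hh"
proof (rule Bochner_Integration.integrable_bound)
  show "integrable lborel (\<lambda>x. 4 * inverse (1 + x\<^sup>2) :: real)"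
    using integrable_inverse_1_plus_square
    by (simp add: set_integrable_def)
  show "hh \<in> borel_measurable lborel" unfolding hh_def by measurable
  show "AE x in lborel. norm (hh x) \<le> norm (4 * inverse (1 + x\<^sup>2))"
    using hh_le hh_nonneg by (auto intro!: AE_I2 simp: add_pos_nonneg)
qed

definition qq :: "real \<Rightarrow> real \<Rightarrow> real" where "qq a t = (1 - cos (a * t)) / t\<^sup>2"

definition Ih :: real where "Ih = (\<integral>t. hh t \<partial>lborel)"

lemma qq_eq: "qq a t = a\<^sup>2 * hh (0 + a * t)"
  unfolding qq_def hh_def by (cases "t = 0"; cases "a = 0") (simp_all add: power_mult_distrib)

lemma qq_measurable[measurable]: "qq a \<in> borel_measurable borel"
  unfolding qq_def[abs_def] by measurable

lemma qq_nonneg: "0 \<le> qq a t"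
  unfolding qq_eq using hh_nonneg by simp

lemma integrable_qq: "integrable lborel (qq a)"
proof (cases "a = 0")
  case True
  have "qq a = (\<lambda>_. 0)" using True by (auto simp: qq_def fun_eq_iff)
  then show ?thesis by simp
next
  case False
  have "integrable lborel (\<lambda>t. hh (0 + a * t))"
    using lborel_integrable_real_affine[OF integrable_hh False, of 0] by simp
  then have "integrable lborel (\<lambda>t. a\<^sup>2 * hh (0 + a * t))" by simp
  then show ?thesis unfolding qq_eq[abs_def] by simp
qed

lemma integral_qq: "(\<integral>t. qq a t \<partial>lborel) = \<bar>a\<bar> * Ih"
proof (cases "a = 0")
  case True then show ?thesis by (simp add: qq_def)
next
  case False
  have "Ih = \<bar>a\<bar> * (\<integral>t. hh (0 + a * t) \<partial>lborel)"
    unfolding Ih_def using lborel_integral_real_affine[OF False, of hh 0] by simp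
  then have "(\<integral>t. hh (0 + a * t) \<partial>lborel) = Ih / \<bar>a\<bar>" using False by (simp add: field_simps)
  then have "(\<integral>t. qq a t \<partial>lborel) = a\<^sup>2 * (Ih / \<bar>a\<bar>)"
    unfolding qq_eq by simp
  also have "\<dots> = \<bar>a\<bar> * Ih" using False by (simp add: power2_eq_square field_simps)
  finally show ?thesis .
qed

lemma qq_cos_identity:
  "qq B t * cos (A * t) = qq (A + B) t / 2 + qq (A - B) t / 2 - qq A t"
proof -
  have e: "(1 - cos (B * t)) * cos (A * t) = (1 - cos ((A + B) * t)) / 2 + (1 - cos ((A - B) * t)) / 2 - (1 - cos (A * t))"
    by (simp add: distrib_right left_diff_distrib cos_add cos_diff) (simp add: field_simps)
  have "qq B t * cos (A * t) = ((1 - cos (B * t)) * cos (A * t)) / t\<^sup>2" by (simp add: qq_def)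
  also have "\<dots> = ((1 - cos ((A + B) * t)) / 2 + (1 - cos ((A - B) * t)) / 2 - (1 - cos (A * t))) / t\<^sup>2"
    by (simp only: e)
  also have "\<dots> = qq (A + B) t / 2 + qq (A - B) t / 2 - qq A t"
    unfolding qq_def by (cases "t = 0") (simp_all add: field_simps)
  finally show ?thesis .
qed

lemma integral_odd_zero:
  fixes f :: "real \<Rightarrow> real"
  assumes "\<And>t. f (- t) = - f t"
  shows "(\<integral>t. f t \<partial>lborel) = 0"
proof -
  have "(\<integral>t. f t \<partial>lborel) = \<bar>-1\<bar> *\<^sub>R (\<integral>t. f (0 + (-1) * t) \<partial>lborel)"
    by (rule lborel_integral_real_affine) simp
  also have "\<dots> = - (\<integral>t. f t \<partial>lborel)" using assms by simp
  finally show ?thesis by simp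
qed

definition Gft :: "real \<Rightarrow> real \<Rightarrow> complex" where
  "Gft b u = (\<integral>t. complex_of_real (qq (2 * pi * b) t) * cis (- (2 * pi * u * t)) \<partial>lborel)"

lemma integrable_qq_cis: "integrable lborel (\<lambda>t. complex_of_real (qq a t) * cis (- (2 * pi * u * t)))"
proof (rule Bochner_Integration.integrable_bound)
  show "integrable lborel (qq a)" by (rule integrable_qq)
  show "(\<lambda>t. complex_of_real (qq a t) * cis (- (2 * pi * u * t))) \<in> borel_measurable lborel"
  proof -
    have [measurable]: "(\<lambda>x. cis (- (2 * pi * u * x))) \<in> borel_measurable borel"
      by (intro borel_measurable_continuous_onI continuous_intros)
    show ?thesis by measurable
  qed
  show "AE x in lborel. norm (complex_of_real (qq a x) * cis (- (2 * pi * u * x))) \<le> norm (qq a x)"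
    by (auto simp: norm_mult)
qed

lemma Gft_zero:
  assumes b: "0 \<le> b" and u: "b \<le> \<bar>u\<bar>"
  shows "Gft b u = 0"
proof -
  let ?B = "2 * pi * b" and ?A = "2 * pi * u"
  have ic: "integrable lborel (\<lambda>t. qq ?B t * cos (?A * t))"
    by (rule Bochner_Integration.integrable_bound[OF integrable_qq[of ?B]]) (auto simp: qq_nonneg abs_mult intro!: mult_left_le)
  have isn: "integrable lborel (\<lambda>t. qq ?B t * sin (?A * t))"
    by (rule Bochner_Integration.integrable_bound[OF integrable_qq[of ?B]]) (auto simp: qq_nonneg abs_mult intro!: mult_left_le)
  have pw: "complex_of_real (qq ?B t) * cis (- (?A * t)) =
      complex_of_real (qq ?B t * cos (?A * t)) - \<i> * complex_of_real (qq ?B t * sin (?A * t))" for t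
    by (simp add: cis.ctr complex_eq_iff)
  have "Gft b u = (\<integral>t. complex_of_real (qq ?B t * cos (?A * t)) - \<i> * complex_of_real (qq ?B t * sin (?A * t)) \<partial>lborel)"
    unfolding Gft_def using pw by (simp add: mult.assoc)
  also have "\<dots> = complex_of_real (\<integral>t. qq ?B t * cos (?A * t) \<partial>lborel) - \<i> * complex_of_real (\<integral>t. qq ?B t * sin (?A * t) \<partial>lborel)"
  proof -
    have i1: "integrable lborel (\<lambda>t. complex_of_real (qq ?B t * cos (?A * t)))"
      using ic by (rule integrable_of_real)
    have i2: "integrable lborel (\<lambda>t. \<i> * complex_of_real (qq ?B t * sin (?A * t)))"
      using isn by (intro integrable_mult_right integrable_of_real)
    show ?thesis
      using Bochner_Integration.integral_diff[OF i1 i2] by (simp del: of_real_mult)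
  qed
  also have "(\<integral>t. qq ?B t * sin (?A * t) \<partial>lborel) = 0"
    by (rule integral_odd_zero) (simp add: qq_def)
  also have "(\<integral>t. qq ?B t * cos (?A * t) \<partial>lborel) = (\<integral>t. qq (?A + ?B) t / 2 + qq (?A - ?B) t / 2 - qq ?A t \<partial>lborel)"
    by (simp add: qq_cos_identity)
  also have "\<dots> = (\<integral>t. qq (?A + ?B) t \<partial>lborel) / 2 + (\<integral>t. qq (?A - ?B) t \<partial>lborel) / 2 - (\<integral>t. qq ?A t \<partial>lborel)"
    using integrable_qq by simp
  also have "\<dots> = pi * Ih * (\<bar>u + b\<bar> + \<bar>u - b\<bar> - 2 * \<bar>u\<bar>)"
  proof -
    have e1: "\<bar>?A + ?B\<bar> = 2 * pi * \<bar>u + b\<bar>"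
      by (simp add: abs_mult flip: distrib_left)
    have e2: "\<bar>?A - ?B\<bar> = 2 * pi * \<bar>u - b\<bar>"
      by (simp add: abs_mult flip: right_diff_distrib)
    have e3: "\<bar>?A\<bar> = 2 * pi * \<bar>u\<bar>"
      by (simp add: abs_mult)
    show ?thesis unfolding integral_qq e1 e2 e3 by (simp add: algebra_simps)
  qed
  also have "\<bar>u + b\<bar> + \<bar>u - b\<bar> - 2 * \<bar>u\<bar> = 0" using b u by (cases "u \<ge> 0") auto
  finally show ?thesis by simp
qed

lemma qq_le: "qq a t \<le> a\<^sup>2 / 2"
proof (cases "t = 0")
  case True then show ?thesis by (simp add: qq_def)
next
  case False
  have "1 - cos (a * t) \<le> (a * t)\<^sup>2 / 2" by (rule one_minus_cos_le)
  then have "(1 - cos (a * t)) / t\<^sup>2 \<le> (a * t)\<^sup>2 / 2 / t\<^sup>2"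
    by (intro divide_right_mono) auto
  also have "\<dots> = a\<^sup>2 / 2" using False by (simp add: power_mult_distrib)
  finally show ?thesis unfolding qq_def .
qed

definition phi :: "real \<Rightarrow> real \<times> real \<Rightarrow> complex" where
  "phi b x = complex_of_real (qq (2 * pi * b) (fst x) * qq (2 * pi * b) (snd x))"

definition Fc :: "real \<Rightarrow> real \<times> real \<Rightarrow> real \<times> real \<Rightarrow> complex" where
  "Fc b w x = cis (2 * pi * (fst w * fst x + snd w * snd x)) * phi b x"

lemma Fc_integrand:
  "Fc b w x * cis (- 2 * pi * (x \<bullet> \<xi>)) =
    (complex_of_real (qq (2 * pi * b) (fst x)) * cis (- (2 * pi * (fst \<xi> - fst w) * fst x))) *
    (complex_of_real (qq (2 * pi * b) (snd x)) * cis (- (2 * pi * (snd \<xi> - snd w) * snd x)))"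
proof -
  obtain x1 x2 where x: "x = (x1, x2)" by (cases x)
  obtain y1 y2 where y: "\<xi> = (y1, y2)" by (cases \<xi>)
  have "cis (2 * pi * (fst w * x1 + snd w * x2)) * cis (- 2 * pi * (x1 * y1 + x2 * y2)) =
        cis (- (2 * pi * (y1 - fst w) * x1)) * cis (- (2 * pi * (y2 - snd w) * x2))"
    unfolding cis_mult by (simp add: algebra_simps)
  then show ?thesis unfolding Fc_def phi_def x y
    by (simp add: inner_Pair mult_ac)
qed

lemma fourier2_Fc: "fourier2 (Fc b w) \<xi> = Gft b (fst \<xi> - fst w) * Gft b (snd \<xi> - snd w)"
  unfolding fourier2_def Fc_integrand Gft_def
  by (rule integral_prod_mult) (rule integrable_qq_cis)+

lemma fourier_support_Fc:
  assumes "0 \<le> b"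
  shows "fourier_support (Fc b w) \<subseteq> {\<xi>. \<bar>fst \<xi> - fst w\<bar> \<le> b \<and> \<bar>snd \<xi> - snd w\<bar> \<le> b}"
  unfolding fourier_support_def
proof (rule closure_minimal)
  show "{\<xi>. fourier2 (Fc b w) \<xi> \<noteq> 0} \<subseteq> {\<xi>. \<bar>fst \<xi> - fst w\<bar> \<le> b \<and> \<bar>snd \<xi> - snd w\<bar> \<le> b}"
    using Gft_zero[OF assms] by (force simp: fourier2_Fc)
  have "closed ({\<xi>::real\<times>real. \<bar>fst \<xi> - fst w\<bar> \<le> b} \<inter> {\<xi>. \<bar>snd \<xi> - snd w\<bar> \<le> b})"
    by (intro closed_Int closed_Collect_le continuous_intros)
  then show "closed {\<xi>::real\<times>real. \<bar>fst \<xi> - fst w\<bar> \<le> b \<and> \<bar>snd \<xi> - snd w\<bar> \<le> b}"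
    by (simp add: Collect_conj_eq)
qed

lemma Jint:
  assumes L: "L > 0" and m: "\<alpha> * L = of_int m"
  shows "(\<integral>t. indicator {L..2*L} t *\<^sub>R cis (2 * pi * \<alpha> * t) \<partial>lborel) = (if \<alpha> = 0 then complex_of_real L else 0)"
proof (cases "\<alpha> = 0")
  case True
  have "(\<integral>t. indicator {L..2*L} t *\<^sub>R cis (2 * pi * \<alpha> * t) \<partial>lborel) = (\<integral>t. indicator {L..2*L} t *\<^sub>R (1::complex) \<partial>lborel)"
    using True by simp
  also have "\<dots> = (\<integral>t. indicator {L..2*L} t \<partial>lborel) *\<^sub>R (1::complex)"
    by (rule integral_scaleR_left) (auto intro!: integrable_real_indicator emeasure_compact_finite)
  also have "(\<integral>t. indicator {L..2*L} t \<partial>lborel) = measure lborel {L..2*L}"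
    by simp
  also have "measure lborel {L..2*L} = L" using L by simp
  finally show ?thesis using True by (simp add: scaleR_conv_of_real)
next
  case False
  let ?F = "\<lambda>t. cis (2 * pi * \<alpha> * t) / (complex_of_real (2 * pi * \<alpha>) * \<i>)"
  have "(\<integral>t. indicator {L..2*L} t *\<^sub>R cis (2 * pi * \<alpha> * t) \<partial>lborel) = (LBINT t:{L..2*L}. cis (2 * pi * \<alpha> * t))"
    by (simp add: set_lebesgue_integral_def)
  also have "\<dots> = (LBINT t=L..2*L. cis (2 * pi * \<alpha> * t))"
    using L by (simp add: interval_integral_Icc)
  also have "\<dots> = ?F (2*L) - ?F L"
  proof (rule interval_integral_FTC_finite)
    show "continuous_on {min L (2 * L)..max L (2 * L)} (\<lambda>t. cis (2 * pi * \<alpha> * t))"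
      by (intro continuous_intros)
    fix x
    have "((\<lambda>t. cis (2 * pi * \<alpha> * t)) has_derivative (\<lambda>t. (2 * pi * \<alpha> * t) *\<^sub>R (\<i> * cis (2 * pi * \<alpha> * x)))) (at x within {min L (2 * L)..max L (2 * L)})"
      by (intro derivative_eq_intros) auto
    then have "((\<lambda>t. cis (2 * pi * \<alpha> * t)) has_vector_derivative ((2 * pi * \<alpha>) *\<^sub>R (\<i> * cis (2 * pi * \<alpha> * x)))) (at x within {min L (2 * L)..max L (2 * L)})"
      by (simp add: has_vector_derivative_def scaleR_scaleR mult.commute)
    then have "(?F has_vector_derivative ((2 * pi * \<alpha>) *\<^sub>R (\<i> * cis (2 * pi * \<alpha> * x))) / (complex_of_real (2 * pi * \<alpha>) * \<i>)) (at x within {min L (2 * L)..max L (2 * L)})"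
      by (rule has_vector_derivative_divide)
    moreover have "(2 * pi * \<alpha>) *\<^sub>R (\<i> * cis (2 * pi * \<alpha> * x)) / (complex_of_real (2 * pi * \<alpha>) * \<i>) = cis (2 * pi * \<alpha> * x)"
      using False by (simp add: scaleR_conv_of_real field_simps)
    ultimately show "(?F has_vector_derivative cis (2 * pi * \<alpha> * x)) (at x within {min L (2 * L)..max L (2 * L)})"
      by simp
  qed
  also have "?F (2*L) = ?F L"
  proof -
    have e1: "2 * pi * \<alpha> * (2 * L) = 2 * pi * real_of_int (2 * m)"
      using m by (simp add: m[symmetric])
    have e2: "2 * pi * \<alpha> * L = 2 * pi * real_of_int m"
      using m by (simp add: m[symmetric])
    have c1: "cis (2 * pi * \<alpha> * (2 * L)) = 1" unfolding e1 by (rule cis_multiple_2pi) simp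
    have c2: "cis (2 * pi * \<alpha> * L) = 1" unfolding e2 by (rule cis_multiple_2pi) simp
    show ?thesis by (simp only: c1 c2)
  qed
  finally show ?thesis using False by simp
qed

lemma integrable_box1: "integrable lborel (\<lambda>t. indicator {L..2*L} t *\<^sub>R cis (2 * pi * \<alpha> * (t::real)))"
  by (rule borel_integrable_compact) (auto intro!: continuous_intros)

lemma Jint2:
  assumes L: "L > 0" and m1: "\<alpha> * L = of_int m1" and m2: "\<beta> * L = of_int m2"
  shows "(\<integral>x. indicator ({L..2*L} \<times> {L..2*L}) x *\<^sub>R cis (2 * pi * (\<alpha> * fst x + \<beta> * snd x)) \<partial>(lborel::(real\<times>real) measure))
     = (if \<alpha> = 0 then complex_of_real L else 0) * (if \<beta> = 0 then complex_of_real L else 0)"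
proof -
  have pw: "indicator ({L..2*L} \<times> {L..2*L}) x *\<^sub>R cis (2 * pi * (\<alpha> * fst x + \<beta> * snd x)) =
    (indicator {L..2*L} (fst x) *\<^sub>R cis (2 * pi * \<alpha> * fst x)) * (indicator {L..2*L} (snd x) *\<^sub>R cis (2 * pi * \<beta> * snd x))" for x :: "real \<times> real"
    by (cases x) (simp add: indicator_times cis_mult algebra_simps split: split_indicator)
  show ?thesis
    unfolding pw integral_prod_mult[OF integrable_box1 integrable_box1] Jint[OF L m1] Jint[OF L m2] ..
qed

lemma integrable_box2: "integrable (lborel::(real\<times>real) measure) (\<lambda>x. indicator ({L..2*L} \<times> {L..2*L}) x *\<^sub>R cis (2 * pi * (\<alpha> * fst x + \<beta> * snd x)))"
  by (rule borel_integrable_compact) (auto intro!: continuous_intros compact_Times)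

lemma box_energy:
  fixes T :: "'b set" and P Q :: "'b \<Rightarrow> int" and L \<sigma>1 \<sigma>2 :: real and m1 m2 :: int
  assumes fin: "finite T" and L: "L > 0"
    and s1: "\<sigma>1 * L = of_int m1" "\<sigma>1 \<noteq> 0" and s2: "\<sigma>2 * L = of_int m2" "\<sigma>2 \<noteq> 0"
  shows "(\<integral>x. indicator ({L..2*L} \<times> {L..2*L}) x * (cmod (\<Sum>t\<in>T. cis (2 * pi * (\<sigma>1 * P t * fst x + \<sigma>2 * Q t * snd x))))\<^sup>2 \<partial>(lborel::(real\<times>real) measure))
     = L\<^sup>2 * card {(t,t'). t \<in> T \<and> t' \<in> T \<and> P t = P t' \<and> Q t = Q t'}"
proof -
  define B where "B = {L..2*L} \<times> {L..2*L}"
  define al where "al t t' = \<sigma>1 * of_int (P t - P t')" for t t'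
  define be where "be t t' = \<sigma>2 * of_int (Q t - Q t')" for t t'
  define Z where "Z x = (\<Sum>t\<in>T. cis (2 * pi * (\<sigma>1 * P t * fst x + \<sigma>2 * Q t * snd x)))" for x :: "real \<times> real"
  have pw: "complex_of_real (indicator B x * (cmod (Z x))\<^sup>2) =
      (\<Sum>t\<in>T. \<Sum>t'\<in>T. indicator B x *\<^sub>R cis (2 * pi * (al t t' * fst x + be t t' * snd x)))" for x :: "real \<times> real"
  proof -
    have "complex_of_real (indicator B x * (cmod (Z x))\<^sup>2) = indicator B x *\<^sub>R (Z x * cnj (Z x))"
      by (simp only: of_real_mult complex_norm_square scaleR_conv_of_real)
    also have "Z x * cnj (Z x) = (\<Sum>t\<in>T. \<Sum>t'\<in>T. cis (2 * pi * (al t t' * fst x + be t t' * snd x)))"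
      unfolding Z_def cnj_sum cis_cnj sum_product cis_mult
      by (intro sum.cong refl arg_cong[where f=cis]) (simp add: al_def be_def algebra_simps)
    finally show ?thesis by (simp add: scaleR_sum_right)
  qed
  have Jv: "(\<integral>x. indicator B x *\<^sub>R cis (2 * pi * (al t t' * fst x + be t t' * snd x)) \<partial>lborel)
      = (if P t = P t' \<and> Q t = Q t' then complex_of_real (L\<^sup>2) else 0)" for t t'
  proof -
    have "al t t' * L = of_int (P t - P t') * (\<sigma>1 * L)" by (simp add: al_def mult_ac)
    then have a1: "al t t' * L = of_int ((P t - P t') * m1)" using s1 by simp
    have "be t t' * L = of_int (Q t - Q t') * (\<sigma>2 * L)" by (simp add: be_def mult_ac)
    then have a2: "be t t' * L = of_int ((Q t - Q t') * m2)" using s2 by simp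
    have "al t t' = 0 \<longleftrightarrow> P t = P t'" unfolding al_def using s1 by simp
    moreover have "be t t' = 0 \<longleftrightarrow> Q t = Q t'" unfolding be_def using s2 by simp
    ultimately show ?thesis unfolding B_def Jint2[OF L a1 a2] by (simp add: power2_eq_square)
  qed
  have "complex_of_real (\<integral>x. indicator B x * (cmod (Z x))\<^sup>2 \<partial>lborel)
      = (\<integral>x. (\<Sum>t\<in>T. \<Sum>t'\<in>T. indicator B x *\<^sub>R cis (2 * pi * (al t t' * fst x + be t t' * snd x))) \<partial>lborel)"
    unfolding pw[symmetric] by (rule integral_complex_of_real[symmetric])
  also have "\<dots> = (\<Sum>t\<in>T. \<Sum>t'\<in>T. (\<integral>x. indicator B x *\<^sub>R cis (2 * pi * (al t t' * fst x + be t t' * snd x)) \<partial>lborel))"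
    unfolding B_def by (simp add: integrable_box2 integrable_sum)
  also have "\<dots> = (\<Sum>t\<in>T. \<Sum>t'\<in>T. (if P t = P t' \<and> Q t = Q t' then complex_of_real (L\<^sup>2) else 0))"
    unfolding Jv ..
  also have "\<dots> = (\<Sum>p\<in>T \<times> T. (if P (fst p) = P (snd p) \<and> Q (fst p) = Q (snd p) then complex_of_real (L\<^sup>2) else 0))"
    by (simp add: sum.cartesian_product case_prod_beta)
  also have "\<dots> = (\<Sum>p\<in>{p\<in>T \<times> T. P (fst p) = P (snd p) \<and> Q (fst p) = Q (snd p)}. complex_of_real (L\<^sup>2))"
    using fin by (intro sum.inter_filter[symmetric]) simp
  also have "\<dots> = complex_of_real (L\<^sup>2 * card {p\<in>T \<times> T. P (fst p) = P (snd p) \<and> Q (fst p) = Q (snd p)})"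
    by simp
  also have "{p\<in>T \<times> T. P (fst p) = P (snd p) \<and> Q (fst p) = Q (snd p)} = {(t,t'). t \<in> T \<and> t' \<in> T \<and> P t = P t' \<and> Q t = Q t'}"
    by auto
  finally show ?thesis unfolding B_def Z_def of_real_eq_iff .
qed

lemma energy_lower:
  fixes f :: "'b \<Rightarrow> 'c"
  assumes fin: "finite T"
  shows "real (card T)^2 \<le> real (card {(t,t'). t \<in> T \<and> t' \<in> T \<and> f t = f t'}) * real (card (f ` T))"
proof -
  define fib where "fib y = {t\<in>T. f t = y}" for y
  have finfib: "\<forall>y\<in>f ` T. finite (fib y)" using fin by (auto simp: fib_def)
  have disj: "\<forall>y\<in>f ` T. \<forall>z\<in>f ` T. y \<noteq> z \<longrightarrow> fib y \<inter> fib z = {}" by (auto simp: fib_def)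
  have disj2: "\<forall>y\<in>f ` T. \<forall>z\<in>f ` T. y \<noteq> z \<longrightarrow> (fib y \<times> fib y) \<inter> (fib z \<times> fib z) = {}" by (auto simp: fib_def)
  have T_eq: "T = (\<Union>y\<in>f ` T. fib y)" by (auto simp: fib_def)
  have E_eq: "{(t,t'). t \<in> T \<and> t' \<in> T \<and> f t = f t'} = (\<Union>y\<in>f ` T. fib y \<times> fib y)" by (auto simp: fib_def)
  have cT: "card T = (\<Sum>y\<in>f ` T. card (fib y))"
    by (subst T_eq, rule card_UN_disjoint) (use fin finfib disj in auto)
  have cE: "card {(t,t'). t \<in> T \<and> t' \<in> T \<and> f t = f t'} = (\<Sum>y\<in>f ` T. card (fib y) ^ 2)"
    unfolding E_eq using fin finfib disj2
    by (subst card_UN_disjoint) (auto simp: card_cartesian_product power2_eq_square)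
  have "real (card T)^2 = (\<Sum>y\<in>f ` T. real (card (fib y)))\<^sup>2" unfolding cT by simp
  also have "\<dots> \<le> (\<Sum>y\<in>f ` T. (real (card (fib y)))\<^sup>2) * real (card (f ` T))"
    by (rule sum_squared_le_sum_of_squares)
  also have "(\<Sum>y\<in>f ` T. (real (card (fib y)))\<^sup>2) = real (card {(t,t'). t \<in> T \<and> t' \<in> T \<and> f t = f t'})"
    unfolding cE by simp
  finally show ?thesis .
qed

lemma powr_realpow0: "0 \<le> (x::real) \<Longrightarrow> 0 < p \<Longrightarrow> x powr real p = x ^ p"
  by (cases "x = 0") (auto simp: powr_realpow)

lemma measurable_cis[measurable]: "f \<in> borel_measurable M \<Longrightarrow> (\<lambda>x. cis (f x)) \<in> borel_measurable M"
proof -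
  assume f: "f \<in> borel_measurable M"
  have "cis \<in> borel_measurable borel" by (intro borel_measurable_continuous_onI continuous_intros)
  then show ?thesis using measurable_compose[OF f] by blast
qed

lemma qq_fst_measurable[measurable]: "(\<lambda>x::real\<times>real. qq a (fst x)) \<in> borel_measurable borel"
  by (rule measurable_compose[OF borel_measurable_continuous_onI[OF continuous_on_fst[OF continuous_on_id]] qq_measurable])

lemma qq_snd_measurable[measurable]: "(\<lambda>x::real\<times>real. qq a (snd x)) \<in> borel_measurable borel"
  by (rule measurable_compose[OF borel_measurable_continuous_onI[OF continuous_on_snd[OF continuous_on_id]] qq_measurable])

lemma qq_pow_le: "1 \<le> p \<Longrightarrow> qq a t ^ p \<le> (a\<^sup>2 / 2) ^ (p - 1) * qq a t"
proof -
  assume p: "1 \<le> p"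
  have "qq a t ^ p = qq a t ^ (p - 1) * qq a t" using p by (metis power_minus_mult less_le_trans zero_less_one)
  also have "\<dots> \<le> (a\<^sup>2 / 2) ^ (p - 1) * qq a t"
    by (intro mult_right_mono power_mono qq_le qq_nonneg)
  finally show ?thesis .
qed

lemma integrable_qq_pow: assumes p: "1 \<le> p" shows "integrable lborel (\<lambda>t. qq a t ^ p)"
  using qq_pow_le[OF p, of a]
  by (intro Bochner_Integration.integrable_bound[OF integrable_mult_right[OF integrable_qq, of "(a\<^sup>2 / 2) ^ (p - 1)" a]])
     (auto intro!: AE_I2 simp: qq_nonneg)

lemma integral_qq_pow_le: "1 \<le> p \<Longrightarrow> (\<integral>t. qq a t ^ p \<partial>lborel) \<le> (a\<^sup>2 / 2) ^ (p - 1) * (\<bar>a\<bar> * Ih)"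
proof -
  assume p: "1 \<le> p"
  have "(\<integral>t. qq a t ^ p \<partial>lborel) \<le> (\<integral>t. (a\<^sup>2 / 2) ^ (p - 1) * qq a t \<partial>lborel)"
    using p by (intro integral_mono integrable_qq_pow integrable_mult_right integrable_qq qq_pow_le)
  also have "\<dots> = (a\<^sup>2 / 2) ^ (p - 1) * (\<bar>a\<bar> * Ih)" by (simp add: integral_qq)
  finally show ?thesis .
qed

lemma norm_Fc: "norm (Fc b w x) = qq (2 * pi * b) (fst x) * qq (2 * pi * b) (snd x)"
  by (simp add: Fc_def phi_def norm_mult qq_nonneg)

lemma Fc_measurable[measurable]: "Fc b w \<in> borel_measurable borel"
proof -
  have c: "(\<lambda>x::real\<times>real. cis (2 * pi * (fst w * fst x + snd w * snd x))) \<in> borel_measurable borel"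
    by (intro borel_measurable_continuous_onI continuous_intros)
  have q: "(\<lambda>x::real\<times>real. complex_of_real (qq (2 * pi * b) (fst x) * qq (2 * pi * b) (snd x))) \<in> borel_measurable borel"
    by measurable
  show ?thesis unfolding Fc_def[abs_def] phi_def using c q by (rule borel_measurable_times)
qed

lemma admissible_Fc:
  assumes p: "1 \<le> p"
  shows "admissible (real p) (Fc b w)"
  unfolding admissible_def
proof
  have i: "integrable lborel (\<lambda>x::real\<times>real. qq (2 * pi * b) (fst x) * qq (2 * pi * b) (snd x))"
    by (intro integrable_prod_mult integrable_qq)
  show "integrable lborel (Fc b w)"
    by (rule Bochner_Integration.integrable_bound[OF i]) (auto simp: norm_Fc qq_nonneg)
  have "(\<lambda>x. norm (Fc b w x) powr real p) = (\<lambda>x::real\<times>real. qq (2 * pi * b) (fst x) ^ p * qq (2 * pi * b) (snd x) ^ p)"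
    using p by (auto simp: norm_Fc powr_realpow0 qq_nonneg power_mult_distrib)
  moreover have "integrable lborel (\<lambda>x::real\<times>real. qq (2 * pi * b) (fst x) ^ p * qq (2 * pi * b) (snd x) ^ p)"
    using p by (intro integrable_prod_mult integrable_qq_pow)
  ultimately show "integrable lborel (\<lambda>x. norm (Fc b w x) powr real p)" by simp
qed

lemma Lp_Fc:
  assumes p: "1 \<le> p"
  shows "(\<integral>x. norm (Fc b w x) powr real p \<partial>lborel) = (\<integral>t. qq (2 * pi * b) t ^ p \<partial>lborel)\<^sup>2"
proof -
  have "(\<lambda>x. norm (Fc b w x) powr real p) = (\<lambda>x::real\<times>real. qq (2 * pi * b) (fst x) ^ p * qq (2 * pi * b) (snd x) ^ p)"
    using p by (auto simp: norm_Fc powr_realpow0 qq_nonneg power_mult_distrib)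
  then have "(\<integral>x. norm (Fc b w x) powr real p \<partial>lborel) = (\<integral>x. qq (2 * pi * b) (fst x) ^ p * qq (2 * pi * b) (snd x) ^ p \<partial>(lborel::(real\<times>real) measure))"
    by simp
  also have "\<dots> = (\<integral>t. qq (2 * pi * b) t ^ p \<partial>lborel) * (\<integral>t. qq (2 * pi * b) t ^ p \<partial>lborel)"
    by (rule integral_prod_mult) (use p in \<open>auto intro: integrable_qq_pow\<close>)
  finally show ?thesis by (simp add: power2_eq_square)
qed

definition dgs :: "nat \<Rightarrow> nat \<Rightarrow> (nat \<Rightarrow> nat) \<Rightarrow> nat" where
  "dgs n i a = (\<Sum>j\<in>{1..i}. a j * n ^ (i - j))"

lemma dgs_Suc: "dgs n (Suc i) a = dgs n i a * n + a (Suc i)"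
proof -
  have "dgs n (Suc i) a = (\<Sum>j\<in>{1..i}. a j * n ^ (Suc i - j)) + a (Suc i)"
    unfolding dgs_def by (simp add: sum.cl_ivl_Suc)
  also have "(\<Sum>j\<in>{1..i}. a j * n ^ (Suc i - j)) = (\<Sum>j\<in>{1..i}. a j * n ^ (i - j) * n)"
    by (intro sum.cong refl) (simp add: Suc_diff_le power_Suc2 mult_ac)
  also have "\<dots> = dgs n i a * n" unfolding dgs_def by (simp add: sum_distrib_right)
  finally show ?thesis .
qed

lemma dgs_lt: "(\<forall>j\<in>{1..i}. a j < n) \<Longrightarrow> dgs n i a < n ^ i"
proof (induction i)
  case 0 then show ?case by (simp add: dgs_def)
next
  case (Suc i)
  then have IH: "dgs n i a + 1 \<le> n ^ i" and a: "a (Suc i) < n" by auto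
  have "dgs n (Suc i) a = dgs n i a * n + a (Suc i)" by (rule dgs_Suc)
  also have "\<dots> < dgs n i a * n + n" using a by simp
  also have "\<dots> = (dgs n i a + 1) * n" by simp
  also have "\<dots> \<le> n ^ i * n" using IH by (rule mult_right_mono) simp
  finally show ?case by (simp add: mult.commute)
qed

lemma dgs_inj: "(\<forall>j\<in>{1..i}. a j < n \<and> b j < n) \<Longrightarrow> dgs n i a = dgs n i b \<Longrightarrow> \<forall>j\<in>{1..i}. a j = b j"
proof (induction i)
  case 0 then show ?case by simp
next
  case (Suc i)
  have a: "a (Suc i) < n" and b: "b (Suc i) < n" using Suc.prems(1) by auto
  have eq: "dgs n i a * n + a (Suc i) = dgs n i b * n + b (Suc i)"
    using Suc.prems(2) by (simp add: dgs_Suc)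
  have "(dgs n i a * n + a (Suc i)) mod n = (dgs n i b * n + b (Suc i)) mod n" using eq by simp
  then have l: "a (Suc i) = b (Suc i)" using a b by simp
  have n: "n > 0" using a by simp
  have "dgs n i a = dgs n i b" using eq l n by simp
  then have "\<forall>j\<in>{1..i}. a j = b j" using Suc.IH Suc.prems(1) by auto
  then show ?case using l by (auto simp: le_Suc_eq)
qed

lemma sum_frac:
  assumes n: "n > 0"
  shows "(\<Sum>j\<in>{1..i}. real (a j) / real n ^ j) = real (dgs n i a) / real n ^ i"
proof -
  have "real (dgs n i a) / real n ^ i = (\<Sum>j\<in>{1..i}. real (a j) * real n ^ (i - j) / real n ^ i)"
    unfolding dgs_def by (simp add: sum_divide_distrib)
  also have "\<dots> = (\<Sum>j\<in>{1..i}. real (a j) / real n ^ j)"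
    using n by (intro sum.cong refl) (simp add: power_diff)
  finally show ?thesis by simp
qed

lemma cset_param:
  assumes ap: "arith_prog_digits n k D" and k: "2 \<le> k" and kn: "k < n"
  shows "\<exists>A d. 1 \<le> d \<and> A + d * (k - 1) < n \<and>
     Cset n D i = (\<lambda>\<mu>. real (dgs n i (\<lambda>j. A + d * \<mu> j)) / real n ^ i) ` (PiE {1..i} (\<lambda>_. {..<k})) \<and>
     inj_on (\<lambda>\<mu>. dgs n i (\<lambda>j. A + d * \<mu> j)) (PiE {1..i} (\<lambda>_. {..<k}))"
proof -
  obtain A d where D: "D = {A + d * j | j. j < k}" and Dn: "D \<subseteq> {0..<n}" and cD: "card D = k"
    using ap unfolding arith_prog_digits_def by blast
  have n: "n > 0" using kn by simp
  have d: "1 \<le> d"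
  proof (rule ccontr)
    assume "\<not> 1 \<le> d"
    then have "D = {A}" using D k by (auto intro!: exI[where x=0])
    then show False using cD k by simp
  qed
  have An: "A + d * (k - 1) < n"
  proof -
    have "A + d * (k - 1) \<in> D" unfolding D using k by auto
    then show ?thesis using Dn by auto
  qed
  have dig: "A + d * m < n" if "m < k" for m
  proof -
    have "d * m \<le> d * (k - 1)" using that by (intro mult_left_mono) auto
    then show ?thesis using An by linarith
  qed
  let ?U = "PiE {1..i} (\<lambda>_. {..<k})"
  let ?c = "\<lambda>\<mu>. real (dgs n i (\<lambda>j. A + d * \<mu> j)) / real n ^ i"
  have "Cset n D i = ?c ` ?U"
  proof
    show "Cset n D i \<subseteq> ?c ` ?U"
    proof
      fix x assume "x \<in> Cset n D i"
      then obtain a where x: "x = (\<Sum>j\<in>{1..i}. real (a j) / real n ^ j)" and a: "\<forall>j\<in>{1..i}. a j \<in> D"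
        unfolding Cset_def by blast
      define \<mu> where "\<mu> = restrict (\<lambda>j. SOME m. m < k \<and> a j = A + d * m) {1..i}"
      have m: "\<mu> j < k \<and> a j = A + d * \<mu> j" if "j \<in> {1..i}" for j
      proof -
        have "\<exists>m. m < k \<and> a j = A + d * m" using a that unfolding D by auto
        then have "(SOME m. m < k \<and> a j = A + d * m) < k \<and> a j = A + d * (SOME m. m < k \<and> a j = A + d * m)"
          by (rule someI_ex)
        then show ?thesis unfolding \<mu>_def using that by simp
      qed
      have "\<mu> \<in> ?U" using m unfolding \<mu>_def by auto
      moreover have "x = ?c \<mu>"
        unfolding x sum_frac[OF n, symmetric] using m by (intro sum.cong refl) auto
      ultimately show "x \<in> ?c ` ?U" by blast
    qed
    show "?c ` ?U \<subseteq> Cset n D i"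
    proof
      fix x assume "x \<in> ?c ` ?U"
      then obtain \<mu> where mu: "\<mu> \<in> ?U" and x: "x = ?c \<mu>" by blast
      have "x = (\<Sum>j\<in>{1..i}. real (A + d * \<mu> j) / real n ^ j)"
        unfolding x sum_frac[OF n] ..
      moreover have "\<forall>j\<in>{1..i}. A + d * \<mu> j \<in> D" using mu unfolding D by auto
      ultimately show "x \<in> Cset n D i" unfolding Cset_def by (auto intro!: exI[of _ "\<lambda>j. A + d * \<mu> j"])
    qed
  qed
  moreover have "inj_on (\<lambda>\<mu>. dgs n i (\<lambda>j. A + d * \<mu> j)) ?U"
  proof (rule inj_onI)
    fix \<mu> \<nu> assume mu: "\<mu> \<in> ?U" and nu: "\<nu> \<in> ?U" and eq: "dgs n i (\<lambda>j. A + d * \<mu> j) = dgs n i (\<lambda>j. A + d * \<nu> j)"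
    have "\<forall>j\<in>{1..i}. A + d * \<mu> j = A + d * \<nu> j"
      by (rule dgs_inj[OF _ eq]) (use mu nu dig in auto)
    then have "\<forall>j\<in>{1..i}. \<mu> j = \<nu> j" using d by auto
    then show "\<mu> = \<nu>" using mu nu by (intro PiE_ext) auto
  qed
  ultimately show ?thesis using d An by blast
qed

lemma qq_lower:
  assumes L: "L > 0" and t: "L \<le> t" "t \<le> 2 * L"
  shows "1 / (4 * L\<^sup>2) \<le> qq (2 * pi * (1 / (4 * L))) t"
proof -
  let ?x = "2 * pi * (1 / (4 * L)) * t"
  have x: "?x = pi / 2 + (pi * t / (2 * L) - pi / 2)" by (simp add: field_simps)
  have y0: "0 \<le> pi * t / (2 * L) - pi / 2" using L t by (simp add: field_simps)
  have y1: "pi * t / (2 * L) - pi / 2 \<le> pi" using L t by (simp add: field_simps)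
  define y where "y = pi * t / (2 * L) - pi / 2"
  have cy: "cos (pi / 2 + y) = - sin y" by (simp add: cos_add)
  have "cos ?x = - sin (pi * t / (2 * L) - pi / 2)"
    unfolding x using cy unfolding y_def .
  also have "\<dots> \<le> 0" using sin_ge_zero[OF y0 y1] by simp
  finally have c: "cos ?x \<le> 0" .
  have t0: "t > 0" using L t by simp
  have "t\<^sup>2 \<le> (2 * L)\<^sup>2" using t t0 by (intro power_mono) auto
  then have tt: "t\<^sup>2 \<le> 4 * L\<^sup>2" by (simp add: power_mult_distrib)
  have "1 / (4 * L\<^sup>2) \<le> 1 / t\<^sup>2"
    using tt t0 L by (intro divide_left_mono) auto
  also have "\<dots> \<le> (1 - cos ?x) / t\<^sup>2" using c by (intro divide_right_mono) auto
  finally show ?thesis unfolding qq_def .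
qed

lemma box_theta:
  fixes c \<delta> b :: real
  assumes c0: "0 \<le> c" and c1: "c + \<delta> \<le> 1" and d0: "0 < \<delta>" and b: "b = \<delta>\<^sup>2 / 16"
  shows "{\<xi>. \<bar>fst \<xi> - (c + \<delta>/2)\<bar> \<le> b \<and> \<bar>snd \<xi> - (c + \<delta>/2)\<^sup>2\<bar> \<le> b}
     \<subseteq> {(x, x\<^sup>2 + t) | x t. c \<le> x \<and> x \<le> c + \<delta> \<and> \<bar>t\<bar> \<le> \<delta>\<^sup>2}"
proof
  fix \<xi> :: "real \<times> real"
  assume "\<xi> \<in> {\<xi>. \<bar>fst \<xi> - (c + \<delta>/2)\<bar> \<le> b \<and> \<bar>snd \<xi> - (c + \<delta>/2)\<^sup>2\<bar> \<le> b}"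
  then have h1: "\<bar>fst \<xi> - (c + \<delta>/2)\<bar> \<le> b" and h2: "\<bar>snd \<xi> - (c + \<delta>/2)\<^sup>2\<bar> \<le> b" by auto
  define x where "x = fst \<xi>"
  define w where "w = c + \<delta>/2"
  have d1: "\<delta> \<le> 1" using c0 c1 by simp
  have bd: "b \<le> \<delta> / 16" using b d0 d1 by (simp add: power2_eq_square mult_le_cancel_right1)
  have b0: "0 \<le> b" unfolding b by simp
  have xw: "\<bar>x - w\<bar> \<le> b" using h1 by (simp add: x_def w_def)
  have "c \<le> x" "x \<le> c + \<delta>" using xw bd d0 unfolding w_def by auto
  have w1: "w \<le> 1" "0 \<le> w" using c0 c1 d0 unfolding w_def by auto
  have xw2: "\<bar>x + w\<bar> \<le> 3" using xw w1 bd d1 by auto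
  have "\<bar>w\<^sup>2 - x\<^sup>2\<bar> = \<bar>x - w\<bar> * \<bar>x + w\<bar>"
    by (simp add: power2_eq_square abs_mult[symmetric] algebra_simps)
  also have "\<dots> \<le> b * 3" using xw xw2 b0 by (intro mult_mono) auto
  finally have e: "\<bar>w\<^sup>2 - x\<^sup>2\<bar> \<le> 3 * b" by simp
  have "\<bar>snd \<xi> - x\<^sup>2\<bar> \<le> \<bar>snd \<xi> - w\<^sup>2\<bar> + \<bar>w\<^sup>2 - x\<^sup>2\<bar>" by simp
  also have "\<dots> \<le> 4 * b" using h2 e unfolding w_def by simp
  also have "\<dots> \<le> \<delta>\<^sup>2" unfolding b by simp
  finally have "\<bar>snd \<xi> - x\<^sup>2\<bar> \<le> \<delta>\<^sup>2" .
  moreover have "\<xi> = (x, x\<^sup>2 + (snd \<xi> - x\<^sup>2))" by (simp add: x_def)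
  ultimately show "\<xi> \<in> {(x, x\<^sup>2 + t) | x t. c \<le> x \<and> x \<le> c + \<delta> \<and> \<bar>t\<bar> \<le> \<delta>\<^sup>2}"
    using \<open>c \<le> x\<close> \<open>x \<le> c + \<delta>\<close> by blast
qed

lemma powr_pow_nat: "0 < (x::real) \<Longrightarrow> (x powr r) ^ p = x powr (r * real p)"
  by (simp add: powr_realpow[symmetric] powr_powr)

lemma prod_cis: "finite A \<Longrightarrow> (\<Prod>l\<in>A. cis (f l)) = cis (\<Sum>l\<in>A. f l)"
  by (induction A rule: finite_induct) (auto simp: cis_mult)

definition C1 :: "nat \<Rightarrow> real" where
  "C1 p = (pi\<^sup>2 / 8) ^ (p - 1) * (pi / 2) * (Ih + 1)"

definition kap :: "nat \<Rightarrow> real" where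
  "kap p = 1 / (4 ^ (2 * p) * (C1 p)\<^sup>2) / (4 * real (p div 2))"

lemma Ih_nonneg: "0 \<le> Ih"
  unfolding Ih_def by (intro integral_nonneg_AE AE_I2 hh_nonneg)

lemma C1_pos: "0 < C1 p"
  unfolding C1_def using Ih_nonneg by (intro mult_pos_pos) auto

lemma main_bound:
  fixes p n k i :: nat and D :: "nat set" and K :: real
  assumes pe: "even p" and p2: "2 \<le> p" and k2: "2 \<le> k" and kn: "k < n"
    and ap: "arith_prog_digits n k D" and i1: "1 \<le> i"
    and HK: "\<forall>F :: real \<Rightarrow> real \<times> real \<Rightarrow> complex.
      (\<forall>c\<in>Cset n D i. admissible (real p) (F c) \<and> fourier_support (F c) \<subseteq> theta n i c) \<longrightarrow>
      Lp_norm2 (real p) (\<lambda>x. \<Sum>c\<in>Cset n D i. F c x)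
        \<le> K * sqrt (\<Sum>c\<in>Cset n D i. (Lp_norm2 (real p) (F c))\<^sup>2)"
  shows "0 \<le> K \<and> kap p * (real k ^ (p div 2 - 1) / (real (p div 2) * real n ^ 2)) ^ i \<le> K ^ p"
proof -
  define s where "s = p div 2"
  have ps: "p = 2 * s" using pe unfolding s_def by simp
  have s1: "1 \<le> s" using p2 ps by simp
  have p1: "1 \<le> p" using p2 by simp
  have n0: "0 < n" using kn by simp
  obtain A d where d1: "1 \<le> d" and An: "A + d * (k - 1) < n"
    and Cs: "Cset n D i = (\<lambda>\<mu>. real (dgs n i (\<lambda>j. A + d * \<mu> j)) / real n ^ i) ` (PiE {1..i} (\<lambda>_. {..<k}))"
    and inj: "inj_on (\<lambda>\<mu>. dgs n i (\<lambda>j. A + d * \<mu> j)) (PiE {1..i} (\<lambda>_. {..<k}))"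
    using cset_param[OF ap k2 kn] by blast
  define U where "U = PiE {1..i} (\<lambda>_. {..<k})"
  define mm where "mm \<mu> = dgs n i (\<lambda>j. A + d * \<mu> j)" for \<mu>
  define cc where "cc \<mu> = real (mm \<mu>) / real n ^ i" for \<mu>
  define X where "X \<mu> = 2 * mm \<mu> + 1" for \<mu>
  define NR where "NR = real n ^ i"
  have NR1: "1 \<le> NR" unfolding NR_def using n0 by simp
  define L where "L = 4 * NR\<^sup>2"
  have L0: "0 < L" unfolding L_def using NR1 by simp
  define b where "b = 1 / (4 * L)"
  define a where "a = 2 * pi * b"
  define \<sigma>1 where "\<sigma>1 = 1 / (2 * NR)"
  define \<sigma>2 where "\<sigma>2 = 1 / (4 * NR\<^sup>2)"
  define F where "F c = Fc b (c + 1 / (2 * NR), (c + 1 / (2 * NR))\<^sup>2)" for c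
  define T where "T = PiE {..<s} (\<lambda>_. U)"
  define Pn where "Pn t = (\<Sum>l<s. X (t l))" for t :: "nat \<Rightarrow> nat \<Rightarrow> nat"
  define Qn where "Qn t = (\<Sum>l<s. (X (t l))\<^sup>2)" for t :: "nat \<Rightarrow> nat \<Rightarrow> nat"
  define S where "S x = (\<Sum>\<mu>\<in>U. cis (2 * pi * (\<sigma>1 * real (X \<mu>) * fst x + \<sigma>2 * (real (X \<mu>))\<^sup>2 * snd x)))" for x :: "real \<times> real"
  define Z where "Z x = (\<Sum>t\<in>T. cis (2 * pi * (\<sigma>1 * real (Pn t) * fst x + \<sigma>2 * real (Qn t) * snd x)))" for x :: "real \<times> real"
  define N where "N = card (Cset n D i)"
  define Aq where "Aq = (\<integral>t. qq a t ^ p \<partial>lborel)"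
  define B where "B = {L..2*L} \<times> {L..2*L}"
  define m0 where "m0 = 1 / (4 * L\<^sup>2)"
  define E where "E = card {(t,t'). t \<in> T \<and> t' \<in> T \<and> Pn t = Pn t' \<and> Qn t = Qn t'}"
  have finU: "finite U" unfolding U_def by (simp add: finite_PiE)
  have finT: "finite T" unfolding T_def using finU by (simp add: finite_PiE)
  have Cs': "Cset n D i = cc ` U" unfolding Cs U_def cc_def mm_def ..
  have injc: "inj_on cc U"
    using inj unfolding U_def cc_def mm_def inj_on_def using n0 by auto
  have cardU: "card U = k ^ i" unfolding U_def by (simp add: card_PiE)
  have N_eq: "N = k ^ i" unfolding N_def Cs' using card_image[OF injc] cardU by simp
  have cardT: "card T = N ^ s" unfolding T_def N_eq using finU by (simp add: card_PiE cardU)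
  have dig: "A + d * \<mu> j < n" if "\<mu> \<in> U" "j \<in> {1..i}" for \<mu> j
  proof -
    have "\<mu> j < k" using that unfolding U_def by auto
    then have "d * \<mu> j \<le> d * (k - 1)" by (intro mult_left_mono) auto
    then show ?thesis using An by linarith
  qed
  have mm_lt: "mm \<mu> < n ^ i" if "\<mu> \<in> U" for \<mu>
    unfolding mm_def using dig[OF that] by (intro dgs_lt) auto
  have X_lt: "X \<mu> < 2 * n ^ i" if "\<mu> \<in> U" for \<mu>
    using mm_lt[OF that] unfolding X_def by simp
  have adm: "\<forall>c\<in>Cset n D i. admissible (real p) (F c) \<and> fourier_support (F c) \<subseteq> theta n i c"
  proof
    fix c assume "c \<in> Cset n D i"
    then obtain \<mu> where mu: "\<mu> \<in> U" and c: "c = cc \<mu>" unfolding Cs' by blast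
    show "admissible (real p) (F c) \<and> fourier_support (F c) \<subseteq> theta n i c"
    proof
      show "admissible (real p) (F c)" unfolding F_def by (rule admissible_Fc[OF p1])
      define \<delta> where "\<delta> = 1 / NR"
      have d0: "0 < \<delta>" unfolding \<delta>_def using NR1 by simp
      have c0: "0 \<le> c" unfolding c cc_def by simp
      have "real (mm \<mu>) + 1 \<le> NR" using mm_lt[OF mu] unfolding NR_def
        by (metis Suc_leI of_nat_Suc of_nat_le_iff of_nat_power add.commute)
      then have c1: "c + \<delta> \<le> 1" unfolding c cc_def \<delta>_def NR_def[symmetric] using NR1
        by (simp add: field_simps)
      have bb: "b = \<delta>\<^sup>2 / 16" unfolding b_def L_def \<delta>_def by (simp add: field_simps power2_eq_square)
      have hd: "c + \<delta> / 2 = c + 1 / (2 * NR)" unfolding \<delta>_def by simp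
      have b0: "0 \<le> b" unfolding b_def using L0 by simp
      have "fourier_support (F c) \<subseteq> {\<xi>. \<bar>fst \<xi> - (c + \<delta>/2)\<bar> \<le> b \<and> \<bar>snd \<xi> - (c + \<delta>/2)\<^sup>2\<bar> \<le> b}"
        unfolding F_def hd using fourier_support_Fc[OF b0, of "(c + 1 / (2 * NR), (c + 1 / (2 * NR))\<^sup>2)"] by simp
      also have "\<dots> \<subseteq> {(x, x\<^sup>2 + t) | x t. c \<le> x \<and> x \<le> c + \<delta> \<and> \<bar>t\<bar> \<le> \<delta>\<^sup>2}"
        by (rule box_theta[OF c0 c1 d0 bb])
      also have "\<dots> = theta n i c"
      proof -
        have "\<delta>\<^sup>2 = 1 / real n ^ (2 * i)" unfolding \<delta>_def NR_def by (simp add: power_mult power_divide mult.commute[of 2 i])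
        moreover have "\<delta> = 1 / real n ^ i" unfolding \<delta>_def NR_def ..
        ultimately show ?thesis unfolding theta_def by simp
      qed
      finally show "fourier_support (F c) \<subseteq> theta n i c" .
    qed
  qed
  have HK': "Lp_norm2 (real p) (\<lambda>x. \<Sum>c\<in>Cset n D i. F c x) \<le> K * sqrt (\<Sum>c\<in>Cset n D i. (Lp_norm2 (real p) (F c))\<^sup>2)"
    using HK adm by blast
  have a_eq: "a = 2 * pi * b" unfolding a_def ..
  have Lp_F: "Lp_norm2 (real p) (F c) = (Aq\<^sup>2) powr (1 / real p)" for c
    unfolding Lp_norm2_def F_def Lp_Fc[OF p1] Aq_def a_def ..
  have sumRHS: "(\<Sum>c\<in>Cset n D i. (Lp_norm2 (real p) (F c))\<^sup>2) = real N * ((Aq\<^sup>2) powr (1 / real p))\<^sup>2"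
    unfolding Lp_F N_def by simp
  have cc_w: "cc \<mu> + 1 / (2 * NR) = \<sigma>1 * real (X \<mu>)" for \<mu>
    unfolding cc_def \<sigma>1_def X_def NR_def[symmetric] using NR1 by (simp add: field_simps)
  have cc_w2: "(\<sigma>1 * real (X \<mu>))\<^sup>2 = \<sigma>2 * (real (X \<mu>))\<^sup>2" for \<mu>
    unfolding \<sigma>1_def \<sigma>2_def using NR1 by (simp add: field_simps power2_eq_square)
  have sumF: "(\<Sum>c\<in>Cset n D i. F c x) = phi b x * S x" for x
  proof -
    have "(\<Sum>c\<in>Cset n D i. F c x) = (\<Sum>\<mu>\<in>U. F (cc \<mu>) x)"
      unfolding Cs' by (rule sum.reindex[OF injc, unfolded comp_def])
    also have "\<dots> = (\<Sum>\<mu>\<in>U. phi b x * cis (2 * pi * (\<sigma>1 * real (X \<mu>) * fst x + \<sigma>2 * (real (X \<mu>))\<^sup>2 * snd x)))"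
      unfolding F_def Fc_def fst_conv snd_conv cc_w cc_w2 by (simp add: mult_ac)
    also have "\<dots> = phi b x * S x" unfolding S_def by (simp add: sum_distrib_left)
    finally show ?thesis .
  qed
  have SZ: "S x ^ s = Z x" for x
  proof -
    have "S x ^ s = (\<Prod>l\<in>{..<s}. S x)" by simp
    also have "\<dots> = (\<Sum>t\<in>T. \<Prod>l\<in>{..<s}. cis (2 * pi * (\<sigma>1 * real (X (t l)) * fst x + \<sigma>2 * (real (X (t l)))\<^sup>2 * snd x)))"
      unfolding S_def T_def by (rule prod_sum_PiE) (auto simp: finU)
    also have "\<dots> = Z x"
      unfolding Z_def prod_cis[OF finite_lessThan] Pn_def Qn_def
      by (intro sum.cong refl arg_cong[where f=cis]) (simp add: sum_distrib_left sum.distrib algebra_simps)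
    finally show ?thesis .
  qed
  have Snorm: "norm (S x) \<le> real (card U)" for x
  proof -
    have "norm (S x) \<le> (\<Sum>\<mu>\<in>U. norm (cis (2 * pi * (\<sigma>1 * real (X \<mu>) * fst x + \<sigma>2 * (real (X \<mu>))\<^sup>2 * snd x))))"
      unfolding S_def by (rule norm_sum)
    then show ?thesis by simp
  qed
  have normphi: "norm (phi b x) = qq a (fst x) * qq a (snd x)" for x
    unfolding phi_def a_def by (simp add: qq_nonneg norm_mult del: of_real_mult)
  have G_eq: "norm (\<Sum>c\<in>Cset n D i. F c x) powr real p = (qq a (fst x) * qq a (snd x)) ^ p * (norm (Z x))\<^sup>2" for x
  proof -
    have "norm (\<Sum>c\<in>Cset n D i. F c x) powr real p = (norm (phi b x) * norm (S x)) ^ p"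
      unfolding sumF norm_mult using p1 by (intro powr_realpow0) auto
    also have "\<dots> = (qq a (fst x) * qq a (snd x)) ^ p * (norm (S x) ^ s)\<^sup>2"
      unfolding normphi power_mult_distrib ps by (simp add: power_mult[symmetric] mult.commute)
    also have "norm (S x) ^ s = norm (Z x)" unfolding SZ[symmetric] norm_power ..
    finally show ?thesis .
  qed
  have Znorm: "(norm (Z x))\<^sup>2 \<le> real (card U) ^ p" for x
  proof -
    have "norm (Z x) \<le> real (card U) ^ s"
      unfolding SZ[symmetric] norm_power by (intro power_mono Snorm) auto
    then have "(norm (Z x))\<^sup>2 \<le> (real (card U) ^ s)\<^sup>2" by (intro power_mono) auto
    then show ?thesis by (simp add: ps power_mult[symmetric] mult.commute)
  qed
  have measG: "(\<lambda>x. norm (\<Sum>c\<in>Cset n D i. F c x) powr real p) \<in> borel_measurable lborel"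
    unfolding F_def by measurable
  have intG: "integrable lborel (\<lambda>x. norm (\<Sum>c\<in>Cset n D i. F c x) powr real p)"
  proof (rule Bochner_Integration.integrable_bound)
    show "integrable lborel (\<lambda>x::real\<times>real. qq a (fst x) ^ p * qq a (snd x) ^ p * real (card U) ^ p)"
      by (intro integrable_mult_left integrable_prod_mult integrable_qq_pow p1)
    show "AE x in lborel. norm (norm (\<Sum>c\<in>Cset n D i. F c x) powr real p) \<le> norm (qq a (fst x) ^ p * qq a (snd x) ^ p * real (card U) ^ p)"
    proof (intro AE_I2)
      fix x :: "real \<times> real"
      have "(qq a (fst x) * qq a (snd x)) ^ p * (norm (Z x))\<^sup>2 \<le> (qq a (fst x) * qq a (snd x)) ^ p * real (card U) ^ p"
        by (intro mult_left_mono Znorm) (simp add: qq_nonneg)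
      then show "norm (norm (\<Sum>c\<in>Cset n D i. F c x) powr real p) \<le> norm (qq a (fst x) ^ p * qq a (snd x) ^ p * real (card U) ^ p)"
        unfolding G_eq by (simp add: qq_nonneg power_mult_distrib)
    qed
  qed (rule measG)
  have m0_le: "m0 \<le> qq a t" if "t \<in> {L..2*L}" for t
    unfolding m0_def a_def b_def using qq_lower[OF L0] that by auto
  have m00: "0 \<le> m0" unfolding m0_def by simp
  have s1L: "\<sigma>1 * L = of_int (2 * int (n ^ i))" unfolding \<sigma>1_def L_def NR_def using NR1 by (simp add: power2_eq_square)
  have s2L: "\<sigma>2 * L = of_int 1" unfolding \<sigma>2_def L_def using NR1 by simp
  have s10: "\<sigma>1 \<noteq> 0" "\<sigma>2 \<noteq> 0" unfolding \<sigma>1_def \<sigma>2_def using NR1 by auto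
  have boxE: "(\<integral>x. indicator B x * (norm (Z x))\<^sup>2 \<partial>lborel) = L\<^sup>2 * real E"
    using box_energy[OF finT L0 s1L s10(1) s2L s10(2), of "\<lambda>t. int (Pn t)" "\<lambda>t. int (Qn t)"]
    unfolding B_def Z_def E_def by simp
  have low: "m0 ^ (2 * p) * (L\<^sup>2 * real E) \<le> (\<integral>x. norm (\<Sum>c\<in>Cset n D i. F c x) powr real p \<partial>lborel)"
  proof -
    have "(\<integral>x. indicator B x * (m0 ^ (2 * p) * (norm (Z x))\<^sup>2) \<partial>lborel) \<le> (\<integral>x. norm (\<Sum>c\<in>Cset n D i. F c x) powr real p \<partial>lborel)"
    proof (rule integral_mono'[OF intG])
      fix x :: "real \<times> real"
      show "0 \<le> norm (\<Sum>c\<in>Cset n D i. F c x) powr real p" by simp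
      show "indicator B x * (m0 ^ (2 * p) * (norm (Z x))\<^sup>2) \<le> norm (\<Sum>c\<in>Cset n D i. F c x) powr real p"
      proof (cases "x \<in> B")
        case True
        then have "m0 \<le> qq a (fst x)" "m0 \<le> qq a (snd x)" unfolding B_def using m0_le by (auto simp: mem_Times_iff)
        then have "m0 * m0 \<le> qq a (fst x) * qq a (snd x)" using m00 by (intro mult_mono) (auto simp: qq_nonneg)
        then have "(m0 * m0) ^ p \<le> (qq a (fst x) * qq a (snd x)) ^ p" using m00 by (intro power_mono) auto
        then have "m0 ^ (2 * p) * (norm (Z x))\<^sup>2 \<le> (qq a (fst x) * qq a (snd x)) ^ p * (norm (Z x))\<^sup>2"
          by (intro mult_right_mono) (auto simp: power_mult power2_eq_square power_mult_distrib)
        then show ?thesis using True unfolding G_eq by simp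
      next
        case False then show ?thesis by simp
      qed
    qed
    also have "(\<integral>x. indicator B x * (m0 ^ (2 * p) * (norm (Z x))\<^sup>2) \<partial>lborel) = m0 ^ (2 * p) * (\<integral>x. indicator B x * (norm (Z x))\<^sup>2 \<partial>lborel)"
    proof -
      have "(\<lambda>x. indicator B x * (m0 ^ (2 * p) * (norm (Z x))\<^sup>2)) = (\<lambda>x. m0 ^ (2 * p) * (indicator B x * (norm (Z x))\<^sup>2))"
        by (simp add: fun_eq_iff mult.left_commute)
      then show ?thesis by (simp only: integral_mult_right_zero)
    qed
    finally show ?thesis unfolding boxE .
  qed
  define W where "W = (\<lambda>t. (Pn t, Qn t)) ` T"
  have enl: "(real (card T))\<^sup>2 \<le> real E * real (card W)"
    using energy_lower[OF finT, of "\<lambda>t. (Pn t, Qn t)"] unfolding E_def W_def by simp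
  have tU: "t l \<in> U" if "t \<in> T" "l < s" for t l using that unfolding T_def by auto
  have cQ: "card (Qn ` T) \<le> 4 * s * n ^ (2 * i)"
  proof -
    have "Qn ` T \<subseteq> {..< 4 * s * n ^ (2 * i)}"
    proof
      fix q assume "q \<in> Qn ` T"
      then obtain t where t: "t \<in> T" and q: "q = Qn t" by blast
      have "Qn t < (\<Sum>l<s. 4 * n ^ (2 * i))" unfolding Qn_def
      proof (rule sum_strict_mono)
        fix l assume "l \<in> {..<s}"
        then have "X (t l) < 2 * n ^ i" using X_lt tU t by auto
        then have "(X (t l))\<^sup>2 < (2 * n ^ i)\<^sup>2" by (intro power_strict_mono) auto
        then show "(X (t l))\<^sup>2 < 4 * n ^ (2 * i)" by (simp add: power_mult_distrib power_mult[symmetric] mult.commute)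
      qed (use s1 in \<open>auto simp: lessThan_empty_iff\<close>)
      then show "q \<in> {..< 4 * s * n ^ (2 * i)}" using q by (simp add: mult_ac)
    qed
    then show ?thesis by (metis card_lessThan card_mono finite_lessThan)
  qed
  define G where "G M = s + 2 * dgs n i (\<lambda>j. s * A + d * M j)" for M
  have cP: "card (Pn ` T) \<le> (s * k) ^ i"
  proof -
    have "Pn ` T \<subseteq> G ` (PiE {1..i} (\<lambda>_. {..s * (k - 1)}))"
    proof
      fix q assume "q \<in> Pn ` T"
      then obtain t where t: "t \<in> T" and q: "q = Pn t" by blast
      define M where "M = restrict (\<lambda>j. \<Sum>l<s. t l j) {1..i}"
      have "M \<in> PiE {1..i} (\<lambda>_. {..s * (k - 1)})"
      proof -
        have "(\<Sum>l<s. t l j) \<le> s * (k - 1)" if "j \<in> {1..i}" for j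
        proof -
          have "(\<Sum>l<s. t l j) \<le> (\<Sum>l<s. k - 1)"
          proof (rule sum_mono)
            fix l assume "l \<in> {..<s}"
            then have "t l \<in> U" using tU t by auto
            then have "t l j < k" using that unfolding U_def by (auto simp: PiE_iff)
            then show "t l j \<le> k - 1" by simp
          qed
          then show ?thesis by simp
        qed
        then show ?thesis unfolding M_def by auto
      qed
      moreover have "Pn t = G M"
      proof -
        have "Pn t = s + 2 * (\<Sum>l<s. mm (t l))"
        proof -
          have "Pn t = (\<Sum>l<s. 2 * mm (t l) + 1)" unfolding Pn_def X_def ..
          also have "\<dots> = (\<Sum>l<s. 2 * mm (t l)) + s" by (simp only: sum.distrib) simp
          finally show ?thesis by (simp add: sum_distrib_left)
        qed
        also have "(\<Sum>l<s. mm (t l)) = dgs n i (\<lambda>j. s * A + d * M j)"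
          unfolding mm_def dgs_def
        proof -
          have "(\<Sum>l<s. \<Sum>j = 1..i. (A + d * t l j) * n ^ (i - j)) = (\<Sum>j = 1..i. \<Sum>l<s. (A + d * t l j) * n ^ (i - j))"
            by (rule sum.swap)
          also have "\<dots> = (\<Sum>j = 1..i. (s * A + d * M j) * n ^ (i - j))"
          proof (intro sum.cong refl)
            fix j assume j: "j \<in> {1..i}"
            have "(\<Sum>l<s. (A + d * t l j) * n ^ (i - j)) = (\<Sum>l<s. A + d * t l j) * n ^ (i - j)"
              by (rule sum_distrib_right[symmetric])
            also have "(\<Sum>l<s. A + d * t l j) = s * A + d * M j"
              unfolding M_def using j by (simp add: sum.distrib sum_distrib_left)
            finally show "(\<Sum>l<s. (A + d * t l j) * n ^ (i - j)) = (s * A + d * M j) * n ^ (i - j)" .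
          qed
          finally show "(\<Sum>l<s. \<Sum>j = 1..i. (A + d * t l j) * n ^ (i - j)) = (\<Sum>j = 1..i. (s * A + d * M j) * n ^ (i - j))" .
        qed
        finally show ?thesis unfolding G_def .
      qed
      ultimately show "q \<in> G ` (PiE {1..i} (\<lambda>_. {..s * (k - 1)}))" using q by blast
    qed
    then have "card (Pn ` T) \<le> card (G ` (PiE {1..i} (\<lambda>_. {..s * (k - 1)})))"
      by (intro card_mono finite_imageI finite_PiE) auto
    also have "\<dots> \<le> card (PiE {1..i} (\<lambda>_. {..s * (k - 1)}))" by (rule card_image_le) (auto intro: finite_PiE)
    also have "\<dots> = (s * (k - 1) + 1) ^ i" by (simp add: card_PiE)
    also have "\<dots> \<le> (s * k) ^ i"
    proof (rule power_mono)
      have "s * (k - 1) + 1 \<le> s * (k - 1) + s" using s1 by simp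
      also have "\<dots> = s * k" using k2 by (cases k) (auto simp: algebra_simps)
      finally show "s * (k - 1) + 1 \<le> s * k" .
    qed simp
    finally show ?thesis .
  qed
  have cW: "card W \<le> (s * k) ^ i * (4 * s * n ^ (2 * i))"
  proof -
    have "W \<subseteq> Pn ` T \<times> Qn ` T" unfolding W_def by auto
    then have "card W \<le> card (Pn ` T \<times> Qn ` T)" by (intro card_mono) (auto simp: finT)
    also have "\<dots> = card (Pn ` T) * card (Qn ` T)" by (rule card_cartesian_product)
    also have "\<dots> \<le> (s * k) ^ i * (4 * s * n ^ (2 * i))" by (intro mult_mono cP cQ) auto
    finally show ?thesis .
  qed
  define Ig where "Ig = (\<integral>x. norm (\<Sum>c\<in>Cset n D i. F c x) powr real p \<partial>lborel)"
  define Phi where "Phi = (Aq\<^sup>2) powr (1 / real p)"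
  define Wb where "Wb = real ((s * k) ^ i * (4 * s * n ^ (2 * i)))"
  define Ab where "Ab = (a\<^sup>2 / 2) ^ (p - 1) * (a * (Ih + 1))"
  have N1: "1 \<le> N" unfolding N_eq using k2 by simp
  have cT: "real (card T) = real N ^ s" unfolding cardT by simp
  have Wpos: "0 < card W"
  proof -
    have "0 < (real (card T))\<^sup>2" unfolding cT using N1 by simp
    then have "0 < real E * real (card W)" using enl by linarith
    then show ?thesis by (simp add: zero_less_mult_iff)
  qed
  have Epos: "0 < E"
  proof -
    have "0 < (real (card T))\<^sup>2" unfolding cT using N1 by simp
    then have "0 < real E * real (card W)" using enl by linarith
    then show ?thesis by (simp add: zero_less_mult_iff)
  qed
  have m0pos: "0 < m0" unfolding m0_def using L0 by simp
  have LOWpos: "0 < m0 ^ (2 * p) * (L\<^sup>2 * real E)" using m0pos L0 Epos by simp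
  have Igpos: "0 < Ig" unfolding Ig_def using low LOWpos by linarith
  have Aq0: "0 \<le> Aq" unfolding Aq_def by (intro integral_nonneg_AE AE_I2) (simp add: qq_nonneg)
  have a0: "0 < a" unfolding a_def b_def using L0 by simp
  have AqAb: "Aq \<le> Ab"
  proof -
    have "Aq \<le> (a\<^sup>2 / 2) ^ (p - 1) * (\<bar>a\<bar> * Ih)" unfolding Aq_def by (rule integral_qq_pow_le[OF p1])
    also have "\<dots> \<le> Ab" unfolding Ab_def using a0 by (intro mult_left_mono) auto
    finally show ?thesis .
  qed
  have Phi0: "0 \<le> Phi" unfolding Phi_def by simp
  have LpS: "Lp_norm2 (real p) (\<lambda>x. \<Sum>c\<in>Cset n D i. F c x) = Ig powr (1 / real p)"
    unfolding Lp_norm2_def Ig_def ..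
  have up: "Ig powr (1 / real p) \<le> K * (sqrt (real N) * Phi)"
    using HK' unfolding LpS sumRHS Phi_def[symmetric] using Phi0 by (simp add: real_sqrt_mult)
  have Lpos: "0 < Ig powr (1 / real p)" using Igpos by simp
  have K0: "0 < K"
  proof (rule ccontr)
    assume "\<not> 0 < K"
    then have "K * (sqrt (real N) * Phi) \<le> 0" using Phi0 by (intro mult_nonpos_nonneg) auto
    then show False using up Lpos by linarith
  qed
  have "(Ig powr (1 / real p)) ^ p \<le> (K * (sqrt (real N) * Phi)) ^ p"
    using up Lpos by (intro power_mono) auto
  moreover have "(Ig powr (1 / real p)) ^ p = Ig" using Igpos p1 by (simp add: powr_pow_nat)
  moreover have "(K * (sqrt (real N) * Phi)) ^ p = K ^ p * real N ^ s * Aq\<^sup>2"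
  proof -
    have "sqrt (real N) ^ p = real N ^ s" unfolding ps by (simp add: power_mult)
    moreover have "Phi ^ p = Aq\<^sup>2"
    proof (cases "Aq = 0")
      case True then show ?thesis unfolding Phi_def using p1 by simp
    next
      case False then show ?thesis unfolding Phi_def using Aq0 p1 by (simp add: powr_pow_nat)
    qed
    ultimately show ?thesis by (simp add: power_mult_distrib)
  qed
  ultimately have IgK: "Ig \<le> K ^ p * real N ^ s * Aq\<^sup>2" by simp
  have KN0: "0 \<le> K ^ p * real N ^ s" using K0 by simp
  have "m0 ^ (2 * p) * L\<^sup>2 * (real N ^ s)\<^sup>2 \<le> m0 ^ (2 * p) * L\<^sup>2 * (real E * real (card W))"
    using enl unfolding cT using m0pos by (intro mult_left_mono) auto
  also have "\<dots> = (m0 ^ (2 * p) * (L\<^sup>2 * real E)) * real (card W)" by (simp add: mult_ac)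
  also have "\<dots> \<le> Ig * real (card W)" using low unfolding Ig_def by (intro mult_right_mono) auto
  also have "\<dots> \<le> (K ^ p * real N ^ s * Ab\<^sup>2) * Wb"
  proof (intro mult_mono)
    show "Ig \<le> K ^ p * real N ^ s * Ab\<^sup>2"
      using IgK KN0 Aq0 AqAb by (smt (verit) mult_left_mono power_mono)
    show "real (card W) \<le> Wb" unfolding Wb_def using cW by linarith
  qed (use KN0 in auto)
  finally have main1: "m0 ^ (2 * p) * L\<^sup>2 * (real N ^ s)\<^sup>2 \<le> K ^ p * real N ^ s * Ab\<^sup>2 * Wb" .
  define u where "u = 1 / L"
  have u0: "0 < u" unfolding u_def using L0 by simp
  have Lu: "L = 1 / u" unfolding u_def using L0 by simp
  have Ab_eq: "Ab = C1 p * u ^ (2 * p - 1)"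
  proof -
    have ha: "a = pi / 2 * u" unfolding a_def b_def u_def by simp
    have h2: "a\<^sup>2 / 2 = pi\<^sup>2 / 8 * u\<^sup>2" unfolding ha by (simp add: power_mult_distrib power_divide)
    have "Ab = (pi\<^sup>2 / 8) ^ (p - 1) * (u\<^sup>2) ^ (p - 1) * (pi / 2 * u * (Ih + 1))"
      unfolding Ab_def h2 power_mult_distrib[of "pi\<^sup>2 / 8" "u\<^sup>2"] unfolding ha by (simp add: mult_ac)
    also have "(u\<^sup>2) ^ (p - 1) * u = u ^ (2 * p - 1)"
    proof -
      have "2 * p - 1 = 2 * (p - 1) + 1" using p1 by simp
      then show ?thesis by (simp add: power_mult power_add)
    qed
    ultimately show ?thesis unfolding C1_def by (simp add: mult_ac)
  qed
  have m0L: "m0 ^ (2 * p) * L\<^sup>2 = Ab\<^sup>2 / (4 ^ (2 * p) * (C1 p)\<^sup>2)"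
  proof -
    have hm: "m0 = u\<^sup>2 / 4" unfolding m0_def Lu by (simp add: power_divide)
    have "m0 ^ (2 * p) * L\<^sup>2 = u ^ (4 * p) / 4 ^ (2 * p) / u\<^sup>2"
    proof -
      have "(u\<^sup>2 / 4) ^ (2 * p) = u ^ (4 * p) / 4 ^ (2 * p)"
        by (simp add: power_divide power_mult[symmetric] mult.commute)
      then show ?thesis unfolding hm Lu by (simp add: power_divide)
    qed
    also have "\<dots> = u ^ (2 * (2 * p - 1)) / 4 ^ (2 * p)"
    proof -
      have "u ^ (4 * p) = u ^ (2 * (2 * p - 1)) * u\<^sup>2"
      proof -
        have "4 * p = 2 * (2 * p - 1) + 2" using p1 by simp
        then show ?thesis by (simp add: power_add power2_eq_square)
      qed
      then show ?thesis using u0 by simp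
    qed
    also have "\<dots> = Ab\<^sup>2 / (4 ^ (2 * p) * (C1 p)\<^sup>2)"
      unfolding Ab_eq using C1_pos[of p] by (simp add: power_mult_distrib power_mult[symmetric] mult.commute)
    finally show ?thesis .
  qed
  have Ab0: "0 < Ab" unfolding Ab_eq using C1_pos[of p] u0 by simp
  have Ns0: "0 < real N ^ s" using N1 by simp
  have main2: "1 / (4 ^ (2 * p) * (C1 p)\<^sup>2) * real N ^ s \<le> K ^ p * Wb"
  proof -
    have "(Ab\<^sup>2 * real N ^ s) * (1 / (4 ^ (2 * p) * (C1 p)\<^sup>2) * real N ^ s) = m0 ^ (2 * p) * L\<^sup>2 * (real N ^ s)\<^sup>2"
      unfolding m0L by (simp add: power2_eq_square)
    also have "\<dots> \<le> (Ab\<^sup>2 * real N ^ s) * (K ^ p * Wb)" using main1 by (simp add: mult_ac)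
    finally have hh: "(Ab\<^sup>2 * real N ^ s) * (1 / (4 ^ (2 * p) * (C1 p)\<^sup>2) * real N ^ s) \<le> (Ab\<^sup>2 * real N ^ s) * (K ^ p * Wb)" .
    have "0 < Ab\<^sup>2 * real N ^ s" using Ab0 Ns0 by simp
    then show ?thesis using hh mult_le_cancel_left_pos by blast
  qed
  have Wb0: "0 < Wb" unfolding Wb_def using s1 k2 n0 by simp
  have "kap p * (real k ^ (s - 1) / (real s * real n ^ 2)) ^ i = 1 / (4 ^ (2 * p) * (C1 p)\<^sup>2) * real N ^ s / Wb"
  proof -
    have "real k ^ (i * s) = real k ^ i * (real k ^ (s - 1)) ^ i"
    proof -
      have "i * s = i + (s - 1) * i" using s1 by (simp add: algebra_simps)
      then show ?thesis by (simp add: power_add power_mult)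
    qed
    then show ?thesis
      unfolding kap_def Wb_def N_eq s_def[symmetric] using s1 k2 n0
      by (simp add: power_divide power_mult_distrib power_mult[symmetric] field_simps mult.commute[of 2 i])
  qed
  also have "\<dots> \<le> K ^ p" by (subst pos_divide_le_eq[OF Wb0]) (use main2 in \<open>simp add: mult.commute\<close>)
  finally show ?thesis using K0 unfolding s_def by simp
qed

theorem mainTheorem5:
  fixes p :: nat
  assumes "even p" and "p \<ge> 2"
  shows "\<exists>cp Cp :: real. cp > 0 \<and> Cp \<ge> 1 \<and>
    (\<forall>(n::nat) (k::nat) (D::nat set) (i::nat).
       2 \<le> k \<longrightarrow> k < n \<longrightarrow> arith_prog_digits n k D \<longrightarrow> 1 \<le> i \<longrightarrow>
       Dec (real p) n D i \<ge>
         ereal (cp * ((real k powr (1/2 - 1 / real p)) / (Cp * real n powr (2 / real p))) ^ i))"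
proof -
  define s where "s = p div 2"
  have ps: "p = 2 * s" using assms(1) unfolding s_def by simp
  have s1: "1 \<le> s" using assms(2) ps by simp
  have p0: "0 < p" using assms(2) by simp
  have kap0: "0 < kap p" unfolding kap_def using C1_pos[of p] s1 by (simp add: s_def[symmetric])
  define cp where "cp = kap p powr (1 / real p)"
  define Cp where "Cp = real s powr (1 / real p)"
  have cp0: "cp > 0" unfolding cp_def using kap0 by simp
  have Cp1: "Cp \<ge> 1" unfolding Cp_def using s1 p0 by (intro ge_one_powr_ge_zero) auto
  have Cp0: "Cp > 0" using Cp1 by simp
  have cpp: "cp ^ p = kap p" unfolding cp_def using kap0 p0 by (simp add: powr_pow_nat)
  have Cpp: "Cp ^ p = real s" unfolding Cp_def using s1 p0 by (simp add: powr_pow_nat)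
  show ?thesis
  proof (intro exI conjI allI impI)
    show "cp > 0" "Cp \<ge> 1" by fact+
    fix n k :: nat and D :: "nat set" and i :: nat
    assume k2: "2 \<le> k" and kn: "k < n" and ap: "arith_prog_digits n k D" and i1: "1 \<le> i"
    have n0: "0 < real n" and k0: "0 < real k" using k2 kn by auto
    define tg where "tg = cp * ((real k powr (1/2 - 1 / real p)) / (Cp * real n powr (2 / real p))) ^ i"
    have tg0: "0 \<le> tg" unfolding tg_def using cp0 Cp0 by simp
    have kp: "(real k powr (1/2 - 1 / real p)) ^ p = real k ^ (s - 1)"
    proof -
      have "(1/2 - 1 / real p) * real p = real (s - 1)" using ps s1 p0 by (simp add: field_simps of_nat_diff)
      then show ?thesis using k0 by (simp add: powr_pow_nat powr_realpow)
    qed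
    have np: "(real n powr (2 / real p)) ^ p = real n ^ 2"
    proof -
      have "(2 / real p) * real p = real (2::nat)" using p0 by simp
      then show ?thesis using n0 by (simp add: powr_pow_nat powr_realpow del: of_nat_numeral)
    qed
    have tgp: "tg ^ p = kap p * (real k ^ (s - 1) / (real s * real n ^ 2)) ^ i"
    proof -
      define R where "R = (real k powr (1/2 - 1 / real p)) / (Cp * real n powr (2 / real p))"
      have Rp: "R ^ p = real k ^ (s - 1) / (real s * real n ^ 2)"
        unfolding R_def power_divide power_mult_distrib kp np Cpp ..
      have "tg ^ p = cp ^ p * (R ^ i) ^ p" unfolding tg_def R_def by (simp add: power_mult_distrib)
      also have "(R ^ i) ^ p = (R ^ p) ^ i" by (simp flip: power_mult add: mult.commute)
      finally show ?thesis unfolding cpp Rp .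
    qed
    show "Dec (real p) n D i \<ge> ereal tg" unfolding Dec_def
    proof (rule Inf_greatest)
      fix y assume "y \<in> {ereal K |K. \<forall>F :: real \<Rightarrow> real \<times> real \<Rightarrow> complex.
          (\<forall>c\<in>Cset n D i. admissible (real p) (F c) \<and> fourier_support (F c) \<subseteq> theta n i c) \<longrightarrow>
          Lp_norm2 (real p) (\<lambda>x. \<Sum>c\<in>Cset n D i. F c x)
            \<le> K * sqrt (\<Sum>c\<in>Cset n D i. (Lp_norm2 (real p) (F c))\<^sup>2)}"
      then obtain K where y: "y = ereal K" and HK: "\<forall>F :: real \<Rightarrow> real \<times> real \<Rightarrow> complex.
          (\<forall>c\<in>Cset n D i. admissible (real p) (F c) \<and> fourier_support (F c) \<subseteq> theta n i c) \<longrightarrow>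
          Lp_norm2 (real p) (\<lambda>x. \<Sum>c\<in>Cset n D i. F c x)
            \<le> K * sqrt (\<Sum>c\<in>Cset n D i. (Lp_norm2 (real p) (F c))\<^sup>2)" by blast
      from main_bound[OF assms(1,2) k2 kn ap i1 HK]
      have K0: "0 \<le> K" and Kp: "kap p * (real k ^ (s - 1) / (real s * real n ^ 2)) ^ i \<le> K ^ p"
        unfolding s_def by auto
      have "tg ^ p \<le> K ^ p" using Kp tgp by simp
      then have "tg \<le> K" using K0 p0 power_le_imp_le_base[of tg "p - 1" K] by simp
      then show "ereal tg \<le> y" using y by simp
    qed
  qed
qed

end
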